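(* Let $L$ be a finite-dimensional Lie algebra over a field $F$. Then $L$ is two-generated if and only if $L/\phi(L)$ is two-generated.
   Context: All Lie algebras are finite-dimensional over an arbitrary field $F$. A Lie algebra is two-generated if it is generated as a Lie algebra by two of its elements. The Frattini subalgebra $F(L)$ of $L$ is the intersection of all maximal subalgebras of $L$, and the Frattini ideal $\phi(L)$ is the largest ideal of $L$ contained in $F(L)$. *)

theory Defs
  imports Main
begin

record ('k, 'v) lie_alg =
  lcarrier :: "'v set"
  lzero :: 'v
  ladd :: "'v \<Rightarrow> 'v \<Rightarrow> 'v"
  lsmult :: "'k \<Rightarrow> 'v \<Rightarrow> 'v"
  lbr :: "'v \<Rightarrow> 'v \<Rightarrow> 'v"

definition lie_algebra :: "('k::field, 'v, 'm) lie_alg_scheme \<Rightarrow> bool" where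
  "lie_algebra L \<longleftrightarrow>
     (let V = lcarrier L; z = lzero L; a = ladd L; s = lsmult L; b = lbr L in
      z \<in> V
    \<and> (\<forall>x\<in>V. \<forall>y\<in>V. a x y \<in> V)
    \<and> (\<forall>c. \<forall>x\<in>V. s c x \<in> V)
    \<and> (\<forall>x\<in>V. \<forall>y\<in>V. b x y \<in> V)
    \<and> (\<forall>x\<in>V. \<forall>y\<in>V. \<forall>w\<in>V. a (a x y) w = a x (a y w))
    \<and> (\<forall>x\<in>V. \<forall>y\<in>V. a x y = a y x)
    \<and> (\<forall>x\<in>V. a z x = x)
    \<and> (\<forall>x\<in>V. \<exists>y\<in>V. a x y = z)
    \<and> (\<forall>c. \<forall>x\<in>V. \<forall>y\<in>V. s c (a x y) = a (s c x) (s c y))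
    \<and> (\<forall>c d. \<forall>x\<in>V. s (c + d) x = a (s c x) (s d x))
    \<and> (\<forall>c d. \<forall>x\<in>V. s (c * d) x = s c (s d x))
    \<and> (\<forall>x\<in>V. s 1 x = x)
    \<and> (\<forall>x\<in>V. \<forall>y\<in>V. \<forall>w\<in>V. b (a x y) w = a (b x w) (b y w))
    \<and> (\<forall>x\<in>V. \<forall>y\<in>V. \<forall>w\<in>V. b w (a x y) = a (b w x) (b w y))
    \<and> (\<forall>c. \<forall>x\<in>V. \<forall>y\<in>V. b (s c x) y = s c (b x y))
    \<and> (\<forall>c. \<forall>x\<in>V. \<forall>y\<in>V. b x (s c y) = s c (b x y))
    \<and> (\<forall>x\<in>V. b x x = z)
    \<and> (\<forall>x\<in>V. \<forall>y\<in>V. \<forall>w\<in>V. a (a (b x (b y w)) (b y (b w x))) (b w (b x y)) = z))"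

inductive_set lspan :: "('k, 'v, 'm) lie_alg_scheme \<Rightarrow> 'v set \<Rightarrow> 'v set"
  for L S where
  span_zero: "lzero L \<in> lspan L S"
| span_base: "x \<in> S \<Longrightarrow> x \<in> lspan L S"
| span_add: "x \<in> lspan L S \<Longrightarrow> y \<in> lspan L S \<Longrightarrow> ladd L x y \<in> lspan L S"
| span_smult: "x \<in> lspan L S \<Longrightarrow> lsmult L c x \<in> lspan L S"

definition finite_dim :: "('k, 'v, 'm) lie_alg_scheme \<Rightarrow> bool" where
  "finite_dim L \<longleftrightarrow> (\<exists>S. finite S \<and> S \<subseteq> lcarrier L \<and> lspan L S = lcarrier L)"

inductive_set lgen :: "('k, 'v, 'm) lie_alg_scheme \<Rightarrow> 'v set \<Rightarrow> 'v set"
  for L S where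
  gen_zero: "lzero L \<in> lgen L S"
| gen_base: "x \<in> S \<Longrightarrow> x \<in> lgen L S"
| gen_add: "x \<in> lgen L S \<Longrightarrow> y \<in> lgen L S \<Longrightarrow> ladd L x y \<in> lgen L S"
| gen_smult: "x \<in> lgen L S \<Longrightarrow> lsmult L c x \<in> lgen L S"
| gen_br: "x \<in> lgen L S \<Longrightarrow> y \<in> lgen L S \<Longrightarrow> lbr L x y \<in> lgen L S"

definition two_generated :: "('k, 'v, 'm) lie_alg_scheme \<Rightarrow> bool" where
  "two_generated L \<longleftrightarrow> (\<exists>x\<in>lcarrier L. \<exists>y\<in>lcarrier L. lgen L {x, y} = lcarrier L)"

definition subspace :: "('k, 'v, 'm) lie_alg_scheme \<Rightarrow> 'v set \<Rightarrow> bool" where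
  "subspace L M \<longleftrightarrow> M \<subseteq> lcarrier L \<and> lzero L \<in> M
     \<and> (\<forall>x\<in>M. \<forall>y\<in>M. ladd L x y \<in> M) \<and> (\<forall>c. \<forall>x\<in>M. lsmult L c x \<in> M)"

definition subalgebra :: "('k, 'v, 'm) lie_alg_scheme \<Rightarrow> 'v set \<Rightarrow> bool" where
  "subalgebra L M \<longleftrightarrow> subspace L M \<and> (\<forall>x\<in>M. \<forall>y\<in>M. lbr L x y \<in> M)"

definition maximal_subalgebra :: "('k, 'v, 'm) lie_alg_scheme \<Rightarrow> 'v set \<Rightarrow> bool" where
  "maximal_subalgebra L M \<longleftrightarrow> subalgebra L M \<and> M \<noteq> lcarrier L
     \<and> (\<forall>N. subalgebra L N \<and> M \<subseteq> N \<longrightarrow> N = M \<or> N = lcarrier L)"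

definition lie_ideal :: "('k, 'v, 'm) lie_alg_scheme \<Rightarrow> 'v set \<Rightarrow> bool" where
  "lie_ideal L I \<longleftrightarrow> subspace L I \<and> (\<forall>x\<in>lcarrier L. \<forall>i\<in>I. lbr L x i \<in> I)"

text \<open>Frattini subalgebra F(L): intersection of all maximal subalgebras
  (equal to L if there are none).\<close>
definition frattini_sub :: "('k, 'v, 'm) lie_alg_scheme \<Rightarrow> 'v set" where
  "frattini_sub L = lcarrier L \<inter> \<Inter> {M. maximal_subalgebra L M}"

definition frattini_ideal :: "('k, 'v, 'm) lie_alg_scheme \<Rightarrow> 'v set" where
  "frattini_ideal L = (GREATEST I. lie_ideal L I \<and> I \<subseteq> frattini_sub L)"

definition lcoset :: "('k, 'v, 'm) lie_alg_scheme \<Rightarrow> 'v set \<Rightarrow> 'v \<Rightarrow> 'v set" where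
  "lcoset L I x = {ladd L x i | i. i \<in> I}"

definition quotient :: "('k, 'v, 'm) lie_alg_scheme \<Rightarrow> 'v set \<Rightarrow> ('k, 'v set) lie_alg" where
  "quotient L I =
    \<lparr> lcarrier = lcoset L I ` lcarrier L,
      lzero = lcoset L I (lzero L),
      ladd = (\<lambda>A B. lcoset L I (ladd L (SOME a. a \<in> A) (SOME b. b \<in> B))),
      lsmult = (\<lambda>c A. lcoset L I (lsmult L c (SOME a. a \<in> A))),
      lbr = (\<lambda>A B. lcoset L I (lbr L (SOME a. a \<in> A) (SOME b. b \<in> B))) \<rparr>"

end

theory Submission
  imports Defs
begin

locale lie =
  fixes L :: "('k::field, 'v, 'm) lie_alg_scheme"
  assumes LA: "lie_algebra L"
begin

abbreviation "V \<equiv> lcarrier L"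
abbreviation "z \<equiv> lzero L"
abbreviation pl (infixl "\<oplus>" 65) where "pl \<equiv> ladd L"
abbreviation "sm \<equiv> lsmult L"
abbreviation "br \<equiv> lbr L"

lemmas LAU = LA[unfolded lie_algebra_def Let_def]

lemma ax1: "z \<in> V"
  using LAU[THEN conjunct1] by blast

lemma ax2: "\<And>x y. x\<in>V \<Longrightarrow> y\<in>V \<Longrightarrow> x \<oplus> y \<in> V"
  using LAU[THEN conjunct2, THEN conjunct1] by blast

lemma ax3: "\<And>c x. x\<in>V \<Longrightarrow> sm c x \<in> V"
  using LAU[THEN conjunct2, THEN conjunct2, THEN conjunct1] by blast

lemma ax4: "\<And>x y. x\<in>V \<Longrightarrow> y\<in>V \<Longrightarrow> br x y \<in> V"
  using LAU[THEN conjunct2, THEN conjunct2, THEN conjunct2, THEN conjunct1] by blast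

lemma ax5: "\<And>x y w. x\<in>V \<Longrightarrow> y\<in>V \<Longrightarrow> w\<in>V \<Longrightarrow> (x \<oplus> y) \<oplus> w = x \<oplus> (y \<oplus> w)"
  using LAU[THEN conjunct2, THEN conjunct2, THEN conjunct2, THEN conjunct2, THEN conjunct1] by blast

lemma ax6: "\<And>x y. x\<in>V \<Longrightarrow> y\<in>V \<Longrightarrow> x \<oplus> y = y \<oplus> x"
  using LAU[THEN conjunct2, THEN conjunct2, THEN conjunct2, THEN conjunct2, THEN conjunct2, THEN conjunct1] by blast

lemma ax7: "\<And>x. x\<in>V \<Longrightarrow> z \<oplus> x = x"
  using LAU[THEN conjunct2, THEN conjunct2, THEN conjunct2, THEN conjunct2, THEN conjunct2, THEN conjunct2, THEN conjunct1] by blast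

lemma ax8: "\<And>x. x\<in>V \<Longrightarrow> \<exists>y\<in>V. x \<oplus> y = z"
  using LAU[THEN conjunct2, THEN conjunct2, THEN conjunct2, THEN conjunct2, THEN conjunct2, THEN conjunct2, THEN conjunct2, THEN conjunct1] by blast

lemma ax9: "\<And>c x y. x\<in>V \<Longrightarrow> y\<in>V \<Longrightarrow> sm c (x \<oplus> y) = sm c x \<oplus> sm c y"
  using LAU[THEN conjunct2, THEN conjunct2, THEN conjunct2, THEN conjunct2, THEN conjunct2, THEN conjunct2, THEN conjunct2, THEN conjunct2, THEN conjunct1] by blast

lemma ax10: "\<And>c d x. x\<in>V \<Longrightarrow> sm (c + d) x = sm c x \<oplus> sm d x"
  using LAU[THEN conjunct2, THEN conjunct2, THEN conjunct2, THEN conjunct2, THEN conjunct2, THEN conjunct2, THEN conjunct2, THEN conjunct2, THEN conjunct2, THEN conjunct1] by blast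

lemma ax11: "\<And>c d x. x\<in>V \<Longrightarrow> sm (c * d) x = sm c (sm d x)"
  using LAU[THEN conjunct2, THEN conjunct2, THEN conjunct2, THEN conjunct2, THEN conjunct2, THEN conjunct2, THEN conjunct2, THEN conjunct2, THEN conjunct2, THEN conjunct2, THEN conjunct1] by blast

lemma ax12: "\<And>x. x\<in>V \<Longrightarrow> sm 1 x = x"
  using LAU[THEN conjunct2, THEN conjunct2, THEN conjunct2, THEN conjunct2, THEN conjunct2, THEN conjunct2, THEN conjunct2, THEN conjunct2, THEN conjunct2, THEN conjunct2, THEN conjunct2, THEN conjunct1] by blast

lemma ax13: "\<And>x y w. x\<in>V \<Longrightarrow> y\<in>V \<Longrightarrow> w\<in>V \<Longrightarrow> br (x \<oplus> y) w = br x w \<oplus> br y w"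
  using LAU[THEN conjunct2, THEN conjunct2, THEN conjunct2, THEN conjunct2, THEN conjunct2, THEN conjunct2, THEN conjunct2, THEN conjunct2, THEN conjunct2, THEN conjunct2, THEN conjunct2, THEN conjunct2, THEN conjunct1] by blast

lemma ax14: "\<And>x y w. x\<in>V \<Longrightarrow> y\<in>V \<Longrightarrow> w\<in>V \<Longrightarrow> br w (x \<oplus> y) = br w x \<oplus> br w y"
  using LAU[THEN conjunct2, THEN conjunct2, THEN conjunct2, THEN conjunct2, THEN conjunct2, THEN conjunct2, THEN conjunct2, THEN conjunct2, THEN conjunct2, THEN conjunct2, THEN conjunct2, THEN conjunct2, THEN conjunct2, THEN conjunct1] by blast

lemma ax15: "\<And>c x y. x\<in>V \<Longrightarrow> y\<in>V \<Longrightarrow> br (sm c x) y = sm c (br x y)"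
  using LAU[THEN conjunct2, THEN conjunct2, THEN conjunct2, THEN conjunct2, THEN conjunct2, THEN conjunct2, THEN conjunct2, THEN conjunct2, THEN conjunct2, THEN conjunct2, THEN conjunct2, THEN conjunct2, THEN conjunct2, THEN conjunct2, THEN conjunct1] by blast

lemma ax16: "\<And>c x y. x\<in>V \<Longrightarrow> y\<in>V \<Longrightarrow> br x (sm c y) = sm c (br x y)"
  using LAU[THEN conjunct2, THEN conjunct2, THEN conjunct2, THEN conjunct2, THEN conjunct2, THEN conjunct2, THEN conjunct2, THEN conjunct2, THEN conjunct2, THEN conjunct2, THEN conjunct2, THEN conjunct2, THEN conjunct2, THEN conjunct2, THEN conjunct2, THEN conjunct1] by blast

lemma ax17: "\<And>x. x\<in>V \<Longrightarrow> br x x = z"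
  using LAU[THEN conjunct2, THEN conjunct2, THEN conjunct2, THEN conjunct2, THEN conjunct2, THEN conjunct2, THEN conjunct2, THEN conjunct2, THEN conjunct2, THEN conjunct2, THEN conjunct2, THEN conjunct2, THEN conjunct2, THEN conjunct2, THEN conjunct2, THEN conjunct2, THEN conjunct1] by blast

lemmas ax = ax1 ax2 ax3 ax4 ax5 ax6 ax7 ax8 ax9 ax10 ax11 ax12 ax13 ax14 ax15 ax16 ax17

lemmas [simp] = ax(1-4)

lemma addz: "x\<in>V \<Longrightarrow> x \<oplus> z = x"
  using ax(6,7) by simp

lemma cancel: assumes "x\<in>V" "y\<in>V" "w\<in>V" "x \<oplus> y = x \<oplus> w" shows "y = w"
proof -
  obtain n where n: "n\<in>V" "x \<oplus> n = z" using ax(8) assms by blast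
  have "n \<oplus> (x \<oplus> y) = n \<oplus> (x \<oplus> w)" using assms by simp
  hence "(n \<oplus> x) \<oplus> y = (n \<oplus> x) \<oplus> w" using assms n ax(5) by simp
  thus ?thesis using n assms ax(6,7) by simp
qed

lemma sm0: assumes "x\<in>V" shows "sm 0 x = z"
proof -
  have "sm 0 x \<oplus> sm 0 x = sm 0 x \<oplus> z" using ax(10)[of x 0 0] assms addz by simp
  thus ?thesis using cancel[of "sm 0 x" "sm 0 x" z] assms by simp
qed

lemma negr: assumes "x\<in>V" shows "x \<oplus> sm (-1) x = z"
  using ax(10)[of x 1 "-1"] ax(12) sm0 assms by simp

lemma brz: assumes "x\<in>V" shows "br x z = z"
proof -
  have "br x z \<oplus> br x z = br x z \<oplus> z" using ax(14)[of z z x] assms ax(7) addz by simp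
  thus ?thesis using cancel[of "br x z" "br x z" z] assms by simp
qed

lemma anti: assumes "x\<in>V" "y\<in>V" shows "br x y \<oplus> br y x = z"
proof -
  have "z = br (x \<oplus> y) (x \<oplus> y)" using ax(17) assms by simp
  also have "\<dots> = (br x x \<oplus> br x y) \<oplus> (br y x \<oplus> br y y)"
    using assms ax(13)[of x y "x \<oplus> y"] ax(14)[of x y x] ax(14)[of x y y] by simp
  also have "\<dots> = br x y \<oplus> br y x" using assms ax(17) ax(7) addz by simp
  finally show ?thesis by simp
qed

lemma anti2: assumes "x\<in>V" "y\<in>V" shows "br y x = sm (-1) (br x y)"
  using anti[OF assms] negr[of "br x y"] cancel[of "br x y" "br y x" "sm (-1) (br x y)"] assms
  by simp

lemma swap4: assumes "a\<in>V" "i\<in>V" "b\<in>V" "j\<in>V"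
  shows "(a \<oplus> i) \<oplus> (b \<oplus> j) = (a \<oplus> b) \<oplus> (i \<oplus> j)"
proof -
  have "(a \<oplus> i) \<oplus> (b \<oplus> j) = a \<oplus> (i \<oplus> (b \<oplus> j))" using assms ax(5) by simp
  also have "\<dots> = a \<oplus> ((i \<oplus> b) \<oplus> j)" using assms ax(5) by simp
  also have "\<dots> = a \<oplus> ((b \<oplus> i) \<oplus> j)" using assms ax(6)[of i b] by simp
  also have "\<dots> = a \<oplus> (b \<oplus> (i \<oplus> j))" using assms ax(5) by simp
  also have "\<dots> = (a \<oplus> b) \<oplus> (i \<oplus> j)" using assms ax(5) by simp
  finally show ?thesis .
qed

lemma sub_V: "subspace L I \<Longrightarrow> i \<in> I \<Longrightarrow> i \<in> V"
  unfolding subspace_def by blast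

lemma sub_neg: "subspace L I \<Longrightarrow> i \<in> I \<Longrightarrow> sm (-1) i \<in> I"
  unfolding subspace_def by blast

lemma sub_add: "subspace L I \<Longrightarrow> i \<in> I \<Longrightarrow> j \<in> I \<Longrightarrow> i \<oplus> j \<in> I"
  unfolding subspace_def by blast

lemma sub_sm: "subspace L I \<Longrightarrow> i \<in> I \<Longrightarrow> sm c i \<in> I"
  unfolding subspace_def by blast

lemma sub_z: "subspace L I \<Longrightarrow> z \<in> I"
  unfolding subspace_def by blast

lemma coset_eq: assumes I: "subspace L I" and a: "a\<in>V" and i: "i\<in>I"
  shows "lcoset L I (a \<oplus> i) = lcoset L I a"
proof
  have iV: "i \<in> V" using sub_V[OF I i] .
  show "lcoset L I (a \<oplus> i) \<subseteq> lcoset L I a"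
  proof
    fix p assume "p \<in> lcoset L I (a \<oplus> i)"
    then obtain j where j: "j\<in>I" "p = (a \<oplus> i) \<oplus> j" unfolding lcoset_def by blast
    hence "p = a \<oplus> (i \<oplus> j)" using ax(5) a iV sub_V[OF I] by simp
    thus "p \<in> lcoset L I a" using sub_add[OF I i j(1)] unfolding lcoset_def by blast
  qed
  show "lcoset L I a \<subseteq> lcoset L I (a \<oplus> i)"
  proof
    fix p assume "p \<in> lcoset L I a"
    then obtain k where k: "k\<in>I" "p = a \<oplus> k" unfolding lcoset_def by blast
    have kV: "k \<in> V" using sub_V[OF I k(1)] .
    have nV: "sm (-1) i \<in> V" using iV by simp
    have "(a \<oplus> i) \<oplus> (sm (-1) i \<oplus> k) = a \<oplus> ((i \<oplus> sm (-1) i) \<oplus> k)"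
      using ax(5) a iV kV nV by simp
    also have "\<dots> = p" using negr[OF iV] ax(7) kV k(2) by simp
    finally show "p \<in> lcoset L I (a \<oplus> i)"
      using sub_add[OF I sub_neg[OF I i] k(1)] unfolding lcoset_def by blast
  qed
qed

lemma coset_self: "subspace L I \<Longrightarrow> a\<in>V \<Longrightarrow> a \<in> lcoset L I a"
  unfolding lcoset_def using addz[of a] sub_z[of I] by (metis (mono_tags, lifting) mem_Collect_eq)

lemma coset_V: "subspace L I \<Longrightarrow> a\<in>V \<Longrightarrow> p \<in> lcoset L I a \<Longrightarrow> p \<in> V"
  unfolding lcoset_def using sub_V by fastforce

lemma coset_some: assumes "subspace L I" "a\<in>V"
  shows "\<exists>i\<in>I. (SOME p. p \<in> lcoset L I a) = a \<oplus> i"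
proof -
  have "(SOME p. p \<in> lcoset L I a) \<in> lcoset L I a"
    using coset_self[OF assms] by (rule someI)
  thus ?thesis unfolding lcoset_def by blast
qed

lemma q_add: assumes I: "subspace L I" and "a\<in>V" "b\<in>V"
  shows "ladd (quotient L I) (lcoset L I a) (lcoset L I b) = lcoset L I (a \<oplus> b)"
proof -
  obtain i where i: "i\<in>I" "(SOME p. p \<in> lcoset L I a) = a \<oplus> i" using coset_some[OF I assms(2)] by blast
  obtain j where j: "j\<in>I" "(SOME p. p \<in> lcoset L I b) = b \<oplus> j" using coset_some[OF I assms(3)] by blast
  have "ladd (quotient L I) (lcoset L I a) (lcoset L I b) = lcoset L I ((a \<oplus> i) \<oplus> (b \<oplus> j))"
    using i j by (simp add: quotient_def)
  also have "\<dots> = lcoset L I ((a \<oplus> b) \<oplus> (i \<oplus> j))"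
    using swap4 assms sub_V[OF I] i j by simp
  also have "\<dots> = lcoset L I (a \<oplus> b)"
    using coset_eq[OF I _ sub_add[OF I i(1) j(1)]] assms by simp
  finally show ?thesis .
qed

lemma q_sm: assumes I: "subspace L I" and "a\<in>V"
  shows "lsmult (quotient L I) c (lcoset L I a) = lcoset L I (sm c a)"
proof -
  obtain i where i: "i\<in>I" "(SOME p. p \<in> lcoset L I a) = a \<oplus> i" using coset_some[OF I assms(2)] by blast
  have "lsmult (quotient L I) c (lcoset L I a) = lcoset L I (sm c (a \<oplus> i))"
    using i by (simp add: quotient_def)
  also have "\<dots> = lcoset L I (sm c a \<oplus> sm c i)"
    using ax(9) assms sub_V[OF I] i by simp
  also have "\<dots> = lcoset L I (sm c a)"
    using coset_eq[OF I _ sub_sm[OF I i(1)]] assms by simp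
  finally show ?thesis .
qed

lemma q_br: assumes I: "lie_ideal L I" and "a\<in>V" "b\<in>V"
  shows "lbr (quotient L I) (lcoset L I a) (lcoset L I b) = lcoset L I (br a b)"
proof -
  have S: "subspace L I" using I unfolding lie_ideal_def by blast
  have Id: "\<And>x i. x\<in>V \<Longrightarrow> i\<in>I \<Longrightarrow> br x i \<in> I" using I unfolding lie_ideal_def by blast
  obtain i where i: "i\<in>I" "(SOME p. p \<in> lcoset L I a) = a \<oplus> i" using coset_some[OF S assms(2)] by blast
  obtain j where j: "j\<in>I" "(SOME p. p \<in> lcoset L I b) = b \<oplus> j" using coset_some[OF S assms(3)] by blast
  have iV: "i\<in>V" and jV: "j\<in>V" using sub_V[OF S] i j by auto
  have wV: "b \<oplus> j \<in> V" using assms jV by simp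
  have "lbr (quotient L I) (lcoset L I a) (lcoset L I b) = lcoset L I (br (a \<oplus> i) (b \<oplus> j))"
    using i j by (simp add: quotient_def)
  also have "br (a \<oplus> i) (b \<oplus> j) = (br a b \<oplus> br a j) \<oplus> br i (b \<oplus> j)"
    using ax(13)[OF assms(2) iV wV] ax(14)[OF assms(3) jV assms(2)] by simp
  also have "\<dots> = br a b \<oplus> (br a j \<oplus> br i (b \<oplus> j))"
    using ax(5) assms iV jV wV by simp
  also have "br i (b \<oplus> j) = sm (-1) (br (b \<oplus> j) i)" using anti2[OF wV iV] .
  also have "lcoset L I (br a b \<oplus> (br a j \<oplus> sm (-1) (br (b \<oplus> j) i))) = lcoset L I (br a b)"
    using coset_eq[OF S _ sub_add[OF S Id[OF assms(2) j(1)] sub_neg[OF S Id[OF wV i(1)]]]] assms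
    by simp
  finally show ?thesis .
qed

lemma span_sub: assumes "subspace L M" "S \<subseteq> M" shows "lspan L S \<subseteq> M"
proof
  fix x assume "x \<in> lspan L S" thus "x \<in> M"
    by induct (use assms in \<open>auto simp: subspace_def\<close>)
qed

lemma phi_ex:
  defines "P \<equiv> \<lambda>I. lie_ideal L I \<and> I \<subseteq> frattini_sub L"
  defines "J \<equiv> lspan L (\<Union>{I. P I})"
  shows "P J \<and> (\<forall>I. P I \<longrightarrow> I \<subseteq> J)"
proof -
  have U: "\<Union>{I. P I} \<subseteq> V" unfolding P_def lie_ideal_def subspace_def by blast
  have JV: "J \<subseteq> V"
  proof
    fix x assume "x \<in> J" thus "x \<in> V" unfolding J_def
      by induct (use U in auto)
  qed
  have SJ: "subspace L J" unfolding subspace_def J_def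
    using JV[unfolded J_def] by (auto intro: lspan.intros)
  have br: "br x j \<in> J" if x: "x\<in>V" and j: "j \<in> J" for x j
    using j unfolding J_def
  proof induct
    case span_zero thus ?case using brz[OF x] by (auto intro: lspan.intros)
  next
    case (span_base y)
    then obtain I where "P I" "y \<in> I" by blast
    hence "br x y \<in> I" using x unfolding P_def lie_ideal_def by blast
    thus ?case using \<open>P I\<close> by (auto intro: lspan.intros)
  next
    case (span_add a b)
    have "a \<in> V" "b \<in> V" using span_add JV unfolding J_def by auto
    thus ?case using ax(14)[of a b x] x span_add by (auto intro: lspan.intros)
  next
    case (span_smult a c)
    have "a \<in> V" using span_smult JV unfolding J_def by auto
    thus ?case using ax(16)[of x a c] x span_smult by (auto intro: lspan.intros)
  qed
  have "J \<subseteq> frattini_sub L"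
  proof -
    have "J \<subseteq> M" if "maximal_subalgebra L M" for M
    proof -
      have SM: "subspace L M" using that unfolding maximal_subalgebra_def subalgebra_def by blast
      have "\<Union>{I. P I} \<subseteq> M" using that unfolding P_def frattini_sub_def by blast
      thus ?thesis unfolding J_def using span_sub[OF SM] by blast
    qed
    thus ?thesis using JV unfolding frattini_sub_def by blast
  qed
  moreover have "\<forall>I. P I \<longrightarrow> I \<subseteq> J" unfolding J_def by (auto intro: lspan.intros)
  ultimately show ?thesis using SJ br unfolding P_def lie_ideal_def by blast
qed

lemma phi_props: "lie_ideal L (frattini_ideal L)" "frattini_ideal L \<subseteq> frattini_sub L"
proof -
  define P where "P \<equiv> \<lambda>I. lie_ideal L I \<and> I \<subseteq> frattini_sub L"
  obtain J where "P J" "\<forall>I. P I \<longrightarrow> I \<subseteq> J" using phi_ex unfolding P_def by blast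
  hence "frattini_ideal L = J" unfolding frattini_ideal_def P_def[symmetric]
    by (intro Greatest_equality) auto
  thus "lie_ideal L (frattini_ideal L)" "frattini_ideal L \<subseteq> frattini_sub L"
    using \<open>P J\<close> unfolding P_def by auto
qed

lemma phi_max: "maximal_subalgebra L M \<Longrightarrow> frattini_ideal L \<subseteq> M"
  using phi_props(2) unfolding frattini_sub_def by blast

lemma exists_max:
  assumes fd: "finite_dim L" and S: "subalgebra L S" and ne: "S \<noteq> V"
  shows "\<exists>M. maximal_subalgebra L M \<and> S \<subseteq> M"
proof -
  define A where "A = {N. subalgebra L N \<and> S \<subseteq> N \<and> N \<noteq> V}"
  obtain B where B: "finite B" "B \<subseteq> V" "lspan L B = V" using fd unfolding finite_dim_def by blast
  have "\<exists>M\<in>A. \<forall>X\<in>A. M \<subseteq> X \<longrightarrow> X = M"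
  proof (rule subset_Zorn_nonempty)
    show "A \<noteq> {}" using S ne unfolding A_def by blast
  next
    fix C assume C: "C \<noteq> {}" "subset.chain A C"
    have CA: "C \<subseteq> A" and ch: "\<forall>X\<in>C. \<forall>Y\<in>C. X \<subseteq> Y \<or> Y \<subseteq> X"
      using C(2) unfolding subset_chain_def by auto
    obtain N0 where N0: "N0 \<in> C" using C(1) by blast
    have sa: "\<And>N. N \<in> C \<Longrightarrow> subalgebra L N" using CA unfolding A_def by blast
    have two: "\<exists>N\<in>C. x \<in> N \<and> y \<in> N" if xy: "x \<in> \<Union>C" "y \<in> \<Union>C" for x y
    proof -
      obtain N1 N2 where "N1\<in>C" "N2\<in>C" "x\<in>N1" "y\<in>N2" using xy by blast
      thus ?thesis using ch by blast
    qed
    have "subalgebra L (\<Union>C)"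
      unfolding subalgebra_def subspace_def
    proof (intro conjI ballI allI)
      show "\<Union>C \<subseteq> V" using sa unfolding subalgebra_def subspace_def by blast
      show "z \<in> \<Union>C" using sa[OF N0] N0 unfolding subalgebra_def subspace_def by blast
      fix x y assume "x \<in> \<Union>C" "y \<in> \<Union>C"
      then obtain N where "N\<in>C" "x\<in>N" "y\<in>N" using two by blast
      thus "x \<oplus> y \<in> \<Union>C" "br x y \<in> \<Union>C" using sa[of N] unfolding subalgebra_def subspace_def by blast+
    next
      fix c x assume "x \<in> \<Union>C"
      then obtain N where "N\<in>C" "x\<in>N" by blast
      thus "sm c x \<in> \<Union>C" using sa[of N] unfolding subalgebra_def subspace_def by blast
    qed
    moreover have "S \<subseteq> \<Union>C" using N0 CA unfolding A_def by blast
    moreover have "\<Union>C \<noteq> V"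
    proof
      assume U: "\<Union>C = V"
      obtain N where N: "N \<in> C" "B \<subseteq> N"
        using finite_subset_Union_chain[OF B(1) _ C(1) C(2)] B(2) U by blast
      have "lspan L B \<subseteq> N" using span_sub[of N B] sa[OF N(1)] N(2) unfolding subalgebra_def by blast
      hence "N = V" using B(3) sa[OF N(1)] unfolding subalgebra_def subspace_def by blast
      thus False using N(1) CA unfolding A_def by blast
    qed
    ultimately show "\<Union>C \<in> A" unfolding A_def by blast
  qed
  then obtain M where M: "M \<in> A" "\<forall>X\<in>A. M \<subseteq> X \<longrightarrow> X = M" by blast
  have "maximal_subalgebra L M"
    unfolding maximal_subalgebra_def
  proof (intro conjI allI impI)
    show "subalgebra L M" "M \<noteq> V" using M(1) unfolding A_def by auto
    fix N assume "subalgebra L N \<and> M \<subseteq> N"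
    thus "N = M \<or> N = V" using M unfolding A_def by blast
  qed
  thus ?thesis using M(1) unfolding A_def by blast
qed

lemma lgen_V: assumes "S \<subseteq> V" shows "lgen L S \<subseteq> V"
proof
  fix x assume "x \<in> lgen L S" thus "x \<in> V" by (induct rule: lgen.induct) (use assms in auto)
qed

lemma lgen_sub: "S \<subseteq> V \<Longrightarrow> subalgebra L (lgen L S)"
  using lgen_V unfolding subalgebra_def subspace_def by (auto intro: lgen.intros)

end


theorem lemma2p1:
  fixes L :: "('k::field, 'v) lie_alg"
  assumes "lie_algebra L" and "finite_dim L"
  shows "two_generated L \<longleftrightarrow> two_generated (quotient L (frattini_ideal L))"
proof -
  interpret lie L by unfold_locales (rule assms(1))
  define P where "P = frattini_ideal L"
  define Q where "Q = quotient L P"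
  have ID: "lie_ideal L P" using phi_props(1) unfolding P_def .
  have SP: "subspace L P" using ID unfolding lie_ideal_def by blast
  let ?c = "lcoset L P"
  have QC: "lcarrier Q = ?c ` V" unfolding Q_def quotient_def by simp
  have Qz: "lzero Q = ?c z" unfolding Q_def quotient_def by simp
  have Qa: "\<And>a b. a\<in>V \<Longrightarrow> b\<in>V \<Longrightarrow> ladd Q (?c a) (?c b) = ?c (a \<oplus> b)"
    unfolding Q_def using q_add[OF SP] by blast
  have Qs: "\<And>c a. a\<in>V \<Longrightarrow> lsmult Q c (?c a) = ?c (sm c a)"
    unfolding Q_def using q_sm[OF SP] by blast
  have Qb: "\<And>a b. a\<in>V \<Longrightarrow> b\<in>V \<Longrightarrow> lbr Q (?c a) (?c b) = ?c (br a b)"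
    unfolding Q_def using q_br[OF ID] by blast
  show ?thesis
    unfolding P_def[symmetric] Q_def[symmetric]
  proof
    assume "two_generated L"
    then obtain x y where xy: "x\<in>V" "y\<in>V" "lgen L {x,y} = V" unfolding two_generated_def by blast
    have "lgen Q {?c x, ?c y} = lcarrier Q"
    proof
      show "lgen Q {?c x, ?c y} \<subseteq> lcarrier Q"
      proof
        fix C assume "C \<in> lgen Q {?c x, ?c y}"
        thus "C \<in> lcarrier Q"
        proof induct
          case gen_zero thus ?case using QC Qz by simp
        next
          case (gen_base C) thus ?case using QC xy by auto
        next
          case (gen_add C D)
          then obtain a b where "a\<in>V" "b\<in>V" "C = ?c a" "D = ?c b" using QC by auto
          thus ?case using Qa QC by simp
        next
          case (gen_smult C k)
          then obtain a where "a\<in>V" "C = ?c a" using QC by auto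
          thus ?case using Qs QC by simp
        next
          case (gen_br C D)
          then obtain a b where "a\<in>V" "b\<in>V" "C = ?c a" "D = ?c b" using QC by auto
          thus ?case using Qb QC by simp
        qed
      qed
      show "lcarrier Q \<subseteq> lgen Q {?c x, ?c y}"
      proof
        fix C assume "C \<in> lcarrier Q"
        then obtain w where w: "w \<in> V" "C = ?c w" using QC by auto
        have "w \<in> lgen L {x,y}" using w xy by simp
        hence "?c w \<in> lgen Q {?c x, ?c y} \<and> w \<in> V"
        proof induct
          case gen_zero thus ?case using Qz by (metis ax1 lgen.gen_zero)
        next
          case (gen_base a) thus ?case using xy by (auto intro: lgen.gen_base)
        next
          case (gen_add a b) thus ?case using Qa by (metis ax2 lgen.gen_add)
        next
          case (gen_smult a k) thus ?case using Qs by (metis ax3 lgen.gen_smult)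
        next
          case (gen_br a b) thus ?case using Qb by (metis ax4 lgen.gen_br)
        qed
        thus "C \<in> lgen Q {?c x, ?c y}" using w by simp
      qed
    qed
    moreover have "?c x \<in> lcarrier Q" "?c y \<in> lcarrier Q" using QC xy by auto
    ultimately show "two_generated Q" unfolding two_generated_def by blast
  next
    assume "two_generated Q"
    then obtain A B where AB: "A \<in> lcarrier Q" "B \<in> lcarrier Q" "lgen Q {A,B} = lcarrier Q"
      unfolding two_generated_def by blast
    then obtain x y where xy: "x\<in>V" "y\<in>V" "A = ?c x" "B = ?c y" using QC by auto
    let ?S = "lgen L {x,y}"
    have SV: "?S \<subseteq> V" using lgen_V xy by simp
    have rep: "\<exists>s\<in>?S. C = ?c s" if "C \<in> lgen Q {A,B}" for C
      using that
    proof induct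
      case gen_zero thus ?case using Qz by (auto intro: lgen.gen_zero)
    next
      case (gen_base C) thus ?case using xy by (auto intro: lgen.gen_base)
    next
      case (gen_add C D)
      then obtain a b where "a\<in>?S" "b\<in>?S" "C = ?c a" "D = ?c b" by auto
      thus ?case using Qa SV by (auto intro: lgen.gen_add)
    next
      case (gen_smult C k)
      then obtain a where "a\<in>?S" "C = ?c a" by auto
      thus ?case using Qs SV by (auto intro: lgen.gen_smult)
    next
      case (gen_br C D)
      then obtain a b where "a\<in>?S" "b\<in>?S" "C = ?c a" "D = ?c b" by auto
      thus ?case using Qb SV by (auto intro: lgen.gen_br)
    qed
    have "?S = V"
    proof (rule ccontr)
      assume ne: "?S \<noteq> V"
      obtain M where M: "maximal_subalgebra L M" "?S \<subseteq> M"
        using exists_max[OF assms(2) lgen_sub ne] xy by auto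
      have PM: "P \<subseteq> M" using phi_max[OF M(1)] unfolding P_def .
      have SM: "subspace L M" using M(1) unfolding maximal_subalgebra_def subalgebra_def by blast
      have "V \<subseteq> M"
      proof
        fix w assume w: "w \<in> V"
        hence "?c w \<in> lgen Q {A,B}" using AB QC by auto
        then obtain s where s: "s \<in> ?S" "?c w = ?c s" using rep by blast
        have "w \<in> ?c s" using coset_self[OF SP w] s by simp
        then obtain i where "i \<in> P" "w = s \<oplus> i" unfolding lcoset_def by blast
        thus "w \<in> M" using s(1) M(2) PM SM unfolding subspace_def by blast
      qed
      thus False using M(1) unfolding maximal_subalgebra_def subalgebra_def subspace_def by blast
    qed
    thus "two_generated L" using xy unfolding two_generated_def by blast
  qed
qed

end
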